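(* Let $0<q<1$. Then \[ \frac{q^{2/3}}{(1+q)[1/3]_{q^{2}}[5/6]_{q^{2}}}-\sum_{n=1}^{\infty}\frac{(1-q^{4n+1})(1/2|q^{2})_{n}^{2}(1/3|q^{2})_{n}(2/3|q^{2})_{n-1}}{(1-q^{2})([n]_{q^{2}}!)^{2}(7/6|q^{2})_{n}(5/6|q^{2})_{n+1}}\,q^{2n} =\frac{[1/6]_{q^{2}}}{[1/3]_{q^{2}}^{2}[1/2]_{q^{2}}}\cdot\frac{(q^{4/3},q^{2/3};q^{2})_{\infty}\,q^{11/12}}{(q^{1/3},q^{5/3};q^{2})_{\infty}\,\pi_{q}}. \]
   Context: Let $0<q<1$ and write $q^{x}=e^{x\log q}$. $(z;q)_\infty=\prod_{k\ge0}(1-zq^k)$, $(z_1,z_2;q)_\infty=(z_1;q)_\infty(z_2;q)_\infty$. $[z]_{q^2}=\frac{1-q^{2z}}{1-q^2}$; for integers $n\ge0$, $(x|q^2)_n=\prod_{k=0}^{n-1}[x+k]_{q^2}$ (empty product $=1$); $[0]_{q^2}!=1$, $[n]_{q^2}!=\prod_{k=1}^n[k]_{q^2}$. $\pi_q=(1-q^2)q^{1/4}\frac{(q^2;q^2)_\infty^2}{(q;q^2)_\infty^2}$. *)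

theory Defs
  imports "HOL-Analysis.Analysis"
begin

definition qpoch_inf :: "real \<Rightarrow> real \<Rightarrow> real" where
  "qpoch_inf z q = (\<Prod>k. (1 - z * q ^ k))"

text \<open>q-number [z]_{p} = (1 - p^z)/(1 - p), with p = q^2 written as base q: [z]_{q^2} = (1-q^(2z))/(1-q^2).\<close>
definition qnum :: "real \<Rightarrow> real \<Rightarrow> real" where
  "qnum q z = (1 - q powr (2 * z)) / (1 - q\<^sup>2)"

definition qshift :: "real \<Rightarrow> real \<Rightarrow> nat \<Rightarrow> real" where
  "qshift q x n = (\<Prod>k<n. qnum q (x + real k))"

definition qfact :: "real \<Rightarrow> nat \<Rightarrow> real" where
  "qfact q n = (\<Prod>k\<in>{1..n}. qnum q (real k))"

definition qpi :: "real \<Rightarrow> real" where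
  "qpi q = (1 - q\<^sup>2) * q powr (1/4) * (qpoch_inf (q\<^sup>2) (q\<^sup>2))\<^sup>2 / (qpoch_inf q (q\<^sup>2))\<^sup>2"

end

theory Submission
  imports Defs
begin

definition fpoch :: "real \<Rightarrow> real \<Rightarrow> nat \<Rightarrow> real" where
  "fpoch z p n = (\<Prod>k<n. 1 - z * p ^ k)"

lemma fpoch_0[simp]: "fpoch z p 0 = 1" by (simp add: fpoch_def)

lemma fpoch_Suc: "fpoch z p (Suc n) = fpoch z p n * (1 - z * p ^ n)"
  by (simp add: fpoch_def)

lemma fpoch_Suc': "fpoch z p (Suc n) = (1 - z) * fpoch (z * p) p n"
  unfolding fpoch_def by (subst prod.lessThan_Suc_shift) (simp add: mult.assoc)

lemma fpoch_pos: assumes "0 \<le> z" "z < 1" "0 \<le> p" "p \<le> 1" shows "fpoch z p n > 0"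
  unfolding fpoch_def
proof (rule prod_pos)
  fix k assume "k \<in> {..<n}"
  have "p ^ k \<le> 1" using assms by (simp add: power_le_one)
  hence "z * p ^ k \<le> z" using assms by (simp add: mult_left_le)
  thus "0 < 1 - z * p ^ k" using assms by simp
qed

lemma qpoch_conv: fixes z p :: real assumes "0 < p" "p < 1" shows "convergent_prod (\<lambda>k. 1 - z * p ^ k)"
proof -
  have "summable (\<lambda>k. norm ((1 - z * p ^ k) - 1))"
    using assms by (simp add: abs_mult summable_geometric)
  hence "abs_convergent_prod (\<lambda>k. 1 - z * p ^ k)" by (rule summable_imp_abs_convergent_prod)
  thus ?thesis by (rule abs_convergent_prod_imp_convergent_prod)
qed

lemma fpoch_lim: assumes "0 < p" "p < 1" shows "(\<lambda>n. fpoch z p n) \<longlonglongrightarrow> qpoch_inf z p"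
proof -
  have "(\<lambda>n. \<Prod>i\<le>n. 1 - z * p ^ i) \<longlonglongrightarrow> qpoch_inf z p"
    unfolding qpoch_inf_def by (rule convergent_prod_LIMSEQ[OF qpoch_conv[OF assms]])
  hence "(\<lambda>n. fpoch z p (Suc n)) \<longlonglongrightarrow> qpoch_inf z p"
    by (simp add: fpoch_def lessThan_Suc_atMost)
  thus ?thesis by (simp add: filterlim_sequentially_Suc)
qed

lemma qpoch_nz: assumes "0 < p" "p < 1" "0 \<le> z" "z < 1" shows "qpoch_inf z p \<noteq> 0"
  unfolding qpoch_inf_def
proof (rule prodinf_nonzero[OF qpoch_conv[OF assms(1,2)]])
  fix i
  have "p ^ i \<le> 1" using assms by (simp add: power_le_one)
  hence "z * p ^ i \<le> z" using assms by (simp add: mult_left_le)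
  thus "1 - z * p ^ i \<noteq> 0" using assms by simp
qed

lemma qshift_fpoch: assumes "0 < q"
  shows "qshift q x n = fpoch (q powr (2 * x)) (q\<^sup>2) n / (1 - q\<^sup>2) ^ n"
proof -
  have "qshift q x n = (\<Prod>k<n. (1 - q powr (2 * x) * (q\<^sup>2) ^ k) / (1 - q\<^sup>2))"
    unfolding qshift_def qnum_def
  proof (rule prod.cong[OF refl])
    fix k
    have "q powr (2 * (x + real k)) = q powr (2 * x) * q powr (real (2 * k))"
      by (simp add: distrib_left powr_add)
    also have "q powr (real (2 * k)) = (q\<^sup>2) ^ k" using assms by (simp only: powr_realpow power_mult)
    hence "q powr (2 * x) * q powr (real (2 * k)) = q powr (2 * x) * (q\<^sup>2) ^ k" by simp
    finally show "(1 - q powr (2 * (x + real k))) / (1 - q\<^sup>2) = (1 - q powr (2 * x) * (q\<^sup>2) ^ k) / (1 - q\<^sup>2)"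
      by simp
  qed
  also have "\<dots> = fpoch (q powr (2 * x)) (q\<^sup>2) n / (1 - q\<^sup>2) ^ n"
    by (simp add: fpoch_def prod_dividef)
  finally show ?thesis .
qed

lemma qfact_fpoch: assumes "0 < q"
  shows "qfact q n = fpoch (q\<^sup>2) (q\<^sup>2) n / (1 - q\<^sup>2) ^ n"
proof -
  have "qfact q n = (\<Prod>k<n. qnum q (real (Suc k)))"
    unfolding qfact_def by (rule prod.reindex_bij_witness[where i=Suc and j="\<lambda>k. k - 1"]) auto
  also have "\<dots> = (\<Prod>k<n. (1 - q\<^sup>2 * (q\<^sup>2) ^ k) / (1 - q\<^sup>2))"
  proof (rule prod.cong[OF refl])
    fix k
    have "q powr (2 * real (Suc k)) = q powr (real (2 * Suc k))" by simp
    also have "\<dots> = q ^ (2 * Suc k)" using assms by (simp only: powr_realpow)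
    also have "\<dots> = q\<^sup>2 * (q\<^sup>2) ^ k" by (simp only: power_mult power_Suc)
    finally show "qnum q (real (Suc k)) = (1 - q\<^sup>2 * (q\<^sup>2) ^ k) / (1 - q\<^sup>2)"
      by (simp add: qnum_def)
  qed
  also have "\<dots> = fpoch (q\<^sup>2) (q\<^sup>2) n / (1 - q\<^sup>2) ^ n"
    by (simp add: fpoch_def prod_dividef)
  finally show ?thesis .
qed

lemma key:
  fixes u x :: real
  shows "(1 - u^6*x)^2*(1 - u^7*x)*(1 - u^11*x) - (1 - u^9*x)^2*(1 - u^8*x)*(1 - u^4*x)
       = (1 - u^15*x^2)*(1 - u^3)*(1 - u^2)^2*u^4*x"
  by algebra

lemma step_alg:
  fixes A B C D E F c e g h k w t z n1 n2 n3 m1 m2 m3 :: real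
  assumes nz: "A \<noteq> 0" "B \<noteq> 0" "C \<noteq> 0" "D \<noteq> 0" "E \<noteq> 0" "F \<noteq> 0" "c \<noteq> 0"
    "e \<noteq> 0" "h \<noteq> 0" "k \<noteq> 0" "n1 \<noteq> 0" "n2 \<noteq> 0" "n3 \<noteq> 0"
  and key: "n1^2*n2*n3 - m1^2*m2*m3 = w*g*h^2*z"
  shows "w*((g*A)/(c*e))^2*((h*B)/(c*e))*(C/c) / (e*(D*n1/(c*e))^2*(E*n2/(c*e))*(k*F*n3/(c*e*e))) * (t*z)
 = e*g*t/(h*k) * (A^2*B*C/(D^2*E*F) - (A*m1)^2*(B*m2)*(C*m3)/((D*n1)^2*(E*n2)*(F*n3)))"
proof -
  have "A^2*B*C/(D^2*E*F) - (A*m1)^2*(B*m2)*(C*m3)/((D*n1)^2*(E*n2)*(F*n3))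
     = A^2*B*C*(n1^2*n2*n3 - m1^2*m2*m3)/(D^2*E*F*(n1^2*n2*n3))"
    using nz by (simp add: field_simps)
  also have "\<dots> = A^2*B*C*(w*g*h^2*z)/(D^2*E*F*(n1^2*n2*n3))" by (simp only: key)
  finally have R: "A^2*B*C/(D^2*E*F) - (A*m1)^2*(B*m2)*(C*m3)/((D*n1)^2*(E*n2)*(F*n3))
     = A^2*B*C*(w*g*h^2*z)/(D^2*E*F*(n1^2*n2*n3))" .
  show ?thesis unfolding R using nz by (simp add: field_simps power2_eq_square)
qed

lemma first_alg:
  fixes t m n b d :: real
  assumes "m \<noteq> 0" "n \<noteq> 0" "b \<noteq> 0" "d \<noteq> 0"
  shows "t / (n * (b / (m * n)) * (d / (m * n))) = m * n * m * t / (b * d)"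
  using assms by (simp add: field_simps power2_eq_square)

lemma kpq_alg:
  fixes A B C D E F e g h k l t r :: real
  assumes "A \<noteq> 0" "B \<noteq> 0" "C \<noteq> 0" "D \<noteq> 0" "E \<noteq> 0" "F \<noteq> 0"
    "e \<noteq> 0" "g \<noteq> 0" "h \<noteq> 0" "k \<noteq> 0" "l \<noteq> 0" "r \<noteq> 0"
  shows "e * g * t / (h * k) * (A^2 * B * C / (D^2 * E * F))
    = (l / e) / ((h / e)^2 * (g / e)) * (C * (h * B) * (r * t))
      / ((l * E) * (k * F) * (e * r * D^2 / (g * A)^2))"
  using assms by (simp add: field_simps power2_eq_square)

theorem mainTheorem13:
  fixes q :: real
  assumes "0 < q" "q < 1"
  shows "q powr (2/3) / ((1 + q) * qnum q (1/3) * qnum q (5/6))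
    - (\<Sum>n. (1 - q ^ (4 * Suc n + 1)) * (qshift q (1/2) (Suc n))\<^sup>2 * qshift q (1/3) (Suc n)
              * qshift q (2/3) n
            / ((1 - q\<^sup>2) * (qfact q (Suc n))\<^sup>2 * qshift q (7/6) (Suc n) * qshift q (5/6) (Suc n + 1))
            * q ^ (2 * Suc n))
    = qnum q (1/6) / ((qnum q (1/3))\<^sup>2 * qnum q (1/2))
      * (qpoch_inf (q powr (4/3)) (q\<^sup>2) * qpoch_inf (q powr (2/3)) (q\<^sup>2) * q powr (11/12))
      / (qpoch_inf (q powr (1/3)) (q\<^sup>2) * qpoch_inf (q powr (5/3)) (q\<^sup>2) * qpi q)"
proof -
  define u where "u = q powr (1/3)"
  have u0: "0 < u" using assms by (simp add: u_def)
  have pw: "q powr r = u ^ k" if "r = real k / 3" for r k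
  proof -
    have "u ^ k = u powr real k" using u0 by (simp add: powr_realpow)
    also have "\<dots> = q powr (1/3 * real k)" by (simp add: u_def powr_powr)
    also have "1/3 * real k = r" using that by simp
    finally show ?thesis by simp
  qed
  have q3: "q = u ^ 3" using pw[of 1 3] assms by simp
  have u1: "u < 1"
  proof (rule ccontr)
    assume "\<not> u < 1" hence "1 \<le> u ^ 3" by simp
    thus False using q3 assms by simp
  qed
  have q2: "q\<^sup>2 = u ^ 6" using q3 by (simp add: power_mult[symmetric])
  have upos: "0 < u ^ j" "u ^ j < 1" if "j > 0" for j
    using u0 u1 that power_strict_decreasing[of 0 j u] by auto
  have fp: "fpoch (u ^ j) (u ^ 6) n > 0" if "j > 0" for j n
    using upos[OF that] upos[of 6] by (intro fpoch_pos) auto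
  have e0: "1 - u^6 \<noteq> 0" "1 - u^2 \<noteq> 0" "1 - u^5 \<noteq> 0" "1 - u^3 \<noteq> 0"
    using upos[of 6] upos[of 2] upos[of 5] upos[of 3] by auto
  have qs: "qshift q x n = fpoch (u ^ j) (u ^ 6) n / (1 - u ^ 6) ^ n" if "q powr (2 * x) = u ^ j" for x j n
    using qshift_fpoch[OF assms(1), of x n] that q2 by simp
  have qsS: "qshift q x (Suc n) = (1 - u ^ j) * fpoch (u ^ (j + 6)) (u ^ 6) n / ((1 - u ^ 6) ^ n * (1 - u ^ 6))"
    if "q powr (2 * x) = u ^ j" for x j n
    using qs[OF that, of "Suc n"] by (simp add: fpoch_Suc' power_add mult.commute)
  have pw12: "q powr (2 * (1/2)) = u ^ 3" by (rule pw) simp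
  have pw13: "q powr (2 * (1/3)) = u ^ 2" by (rule pw) simp
  have pw23: "q powr (2 * (2/3)) = u ^ 4" by (rule pw) simp
  have pw76: "q powr (2 * (7/6)) = u ^ 7" by (rule pw) simp
  have pw56: "q powr (2 * (5/6)) = u ^ 5" by (rule pw) simp
  have pw16: "q powr (2 * (1/6)) = u ^ 1" by (rule pw) simp
  define P where "P m = (fpoch (u^9) (u^6) m)^2 * fpoch (u^8) (u^6) m * fpoch (u^4) (u^6) m
      / ((fpoch (u^6) (u^6) m)^2 * fpoch (u^7) (u^6) m * fpoch (u^11) (u^6) m)" for m
  define K where "K = (1 - u^6) * (1 - u^3) * u^2 / ((1 - u^2) * (1 - u^5))"
  define f where "f = (\<lambda>n. (1 - q ^ (4 * Suc n + 1)) * (qshift q (1/2) (Suc n))\<^sup>2 * qshift q (1/3) (Suc n)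
              * qshift q (2/3) n
            / ((1 - q\<^sup>2) * (qfact q (Suc n))\<^sup>2 * qshift q (7/6) (Suc n) * qshift q (5/6) (Suc n + 1))
            * q ^ (2 * Suc n))"
  have step: "f m = K * (P m - P (Suc m))" for m
  proof -
    define x where "x = (u ^ 6) ^ m"
    have x0: "0 \<le> x" "x \<le> 1" using u0 u1 by (auto simp: x_def power_le_one)
    have n0: "1 - u ^ j * x \<noteq> 0" if "j > 0" for j
    proof -
      have "u ^ j * x \<le> u ^ j" using x0 upos[OF that] mult_left_le[of x "u^j"] by linarith
      thus ?thesis using upos[OF that] by linarith
    qed
    have fS: "fpoch (u ^ j) (u ^ 6) (Suc m) = fpoch (u ^ j) (u ^ 6) m * (1 - u ^ j * x)" for j
      by (simp add: fpoch_Suc x_def)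
    have a1: "qshift q (1/2) (Suc m) = (1 - u^3) * fpoch (u^9) (u^6) m / ((1 - u^6)^m * (1 - u^6))"
      using qsS[OF pw12] by simp
    have a2: "qshift q (1/3) (Suc m) = (1 - u^2) * fpoch (u^8) (u^6) m / ((1 - u^6)^m * (1 - u^6))"
      using qsS[OF pw13] by simp
    have a3: "qshift q (2/3) m = fpoch (u^4) (u^6) m / (1 - u^6)^m"
      using qs[OF pw23] by simp
    have a4: "qfact q (Suc m) = fpoch (u^6) (u^6) m * (1 - u^6 * x) / ((1 - u^6)^m * (1 - u^6))"
      using qfact_fpoch[OF assms(1), of "Suc m"] q2 fS[of 6] by (simp add: mult.commute)
    have a5: "qshift q (7/6) (Suc m) = fpoch (u^7) (u^6) m * (1 - u^7 * x) / ((1 - u^6)^m * (1 - u^6))"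
      using qs[OF pw76, of "Suc m"] fS[of 7] by (simp add: mult.commute)
    have a6: "qshift q (5/6) (Suc m + 1) = (1 - u^5) * fpoch (u^11) (u^6) m * (1 - u^11 * x)
         / ((1 - u^6)^m * (1 - u^6) * (1 - u^6))"
      using qsS[OF pw56, of "Suc m"] fS[of 11] by (simp add: mult.commute mult.left_commute)
    have a7: "q ^ (4 * Suc m + 1) = u^15 * x^2"
      by (simp add: q3 x_def power_mult[symmetric] power_add[symmetric] algebra_simps)
    have a8: "q ^ (2 * Suc m) = u^2 * (u^4 * x)"
      by (simp add: q3 x_def power_mult[symmetric] power_add[symmetric] algebra_simps)
    have a9: "1 - q\<^sup>2 = 1 - u^6" using q2 by simp
    have PS: "P (Suc m) = (fpoch (u^9) (u^6) m * (1 - u^9*x))^2 * (fpoch (u^8) (u^6) m * (1 - u^8*x))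
       * (fpoch (u^4) (u^6) m * (1 - u^4*x))
      / ((fpoch (u^6) (u^6) m * (1 - u^6*x))^2 * (fpoch (u^7) (u^6) m * (1 - u^7*x))
         * (fpoch (u^11) (u^6) m * (1 - u^11*x)))"
      unfolding P_def fS by simp
    have kk: "(1 - u^6*x)^2*(1 - u^7*x)*(1 - u^11*x) - (1 - u^9*x)^2*(1 - u^8*x)*(1 - u^4*x)
       = (1 - u^15*x^2)*(1 - u^3)*(1 - u^2)^2*(u^4*x)"
      using key[of u x] by (simp add: mult.assoc)
    have "f m = (1 - u^15*x^2) * ((1 - u^3) * fpoch (u^9) (u^6) m / ((1 - u^6)^m * (1 - u^6)))\<^sup>2
       * ((1 - u^2) * fpoch (u^8) (u^6) m / ((1 - u^6)^m * (1 - u^6)))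
       * (fpoch (u^4) (u^6) m / (1 - u^6)^m)
       / ((1 - u^6) * (fpoch (u^6) (u^6) m * (1 - u^6 * x) / ((1 - u^6)^m * (1 - u^6)))\<^sup>2
          * (fpoch (u^7) (u^6) m * (1 - u^7 * x) / ((1 - u^6)^m * (1 - u^6)))
          * ((1 - u^5) * fpoch (u^11) (u^6) m * (1 - u^11 * x) / ((1 - u^6)^m * (1 - u^6) * (1 - u^6))))
       * (u^2 * (u^4 * x))"
      unfolding f_def a1 a2 a3 a4 a5 a6 a7 a8 a9 by simp
    also have "\<dots> = K * (P m - P (Suc m))"
      unfolding PS unfolding K_def P_def
      by (rule step_alg[OF _ _ _ _ _ _ _ _ _ _ _ _ _ kk])
         (use fp[of 9 m] fp[of 8 m] fp[of 4 m] fp[of 6 m] fp[of 7 m] fp[of 11 m] e0 n0[of 6] n0[of 7] n0[of 11] in auto)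
    finally show ?thesis .
  qed
  have first: "q powr (2/3) / ((1 + q) * qnum q (1/3) * qnum q (5/6)) = K"
  proof -
    have b1: "q powr (2/3) = u^2" by (rule pw) simp
    have "q powr (2/3) / ((1 + q) * qnum q (1/3) * qnum q (5/6))
        = u^2 / ((1 + u^3) * ((1 - u^2)/(1 - u^6)) * ((1 - u^5)/(1 - u^6)))"
      unfolding qnum_def pw13 pw56 b1 q2 using q3 by simp
    also have "\<dots> = K"
    proof -
      have h6: "1 - u^6 = (1 - u^3) * (1 + u^3)" by algebra
      have "1 + u^3 > 0" using u0 by (simp add: add_pos_pos)
      thus ?thesis unfolding K_def h6 using e0 first_alg[of "1-u^3" "1+u^3" "1-u^2" "1-u^5" "u^2"] by simp
    qed
    finally show ?thesis .
  qed
  have P0: "P 0 = 1" by (simp add: P_def)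
  have psum: "(\<Sum>m<N. f m) = K - K * P N" for N
    by (induction N) (simp_all add: P0 step algebra_simps)
  have fS': "fpoch (u ^ j) (u ^ 6) (Suc N) = (1 - u ^ j) * fpoch (u ^ (j + 6)) (u ^ 6) N" for j N
    by (simp add: fpoch_Suc' power_add)
  have fS1: "fpoch u (u ^ 6) (Suc N) = (1 - u) * fpoch (u ^ 7) (u ^ 6) N" for N
    using fS'[of 1 N] by simp
  have q14: "q powr (1/4) > 0" using assms by simp
  have q1112: "q powr (11/12) = q powr (1/4) * u^2"
  proof -
    have "q powr (11/12) = q powr (1/4 + 2/3)" by simp
    also have "\<dots> = q powr (1/4) * q powr (2/3)" by (rule powr_add)
    also have "q powr (2/3) = u^2" by (rule pw) simp
    finally show ?thesis .
  qed
  have qn16: "qnum q (1/6) = (1 - u) / (1 - u^6)" unfolding qnum_def pw16 q2 by simp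
  have qn13: "qnum q (1/3) = (1 - u^2) / (1 - u^6)" unfolding qnum_def pw13 q2 by simp
  have qn12: "qnum q (1/2) = (1 - u^3) / (1 - u^6)" unfolding qnum_def pw12 q2 by simp
  have e1: "1 - u \<noteq> 0" using u1 by simp
  define C0 where "C0 = qnum q (1/6) / ((qnum q (1/3))\<^sup>2 * qnum q (1/2))"
  define Q where "Q N = C0 * (fpoch (u^4) (u^6) N * fpoch (u^2) (u^6) (Suc N) * q powr (11/12))
      / (fpoch u (u^6) (Suc N) * fpoch (u^5) (u^6) (Suc N)
         * ((1 - u^6) * q powr (1/4) * (fpoch (u^6) (u^6) N)\<^sup>2 / (fpoch (u^3) (u^6) (Suc N))\<^sup>2))" for N
  define R where "R = C0 * (qpoch_inf (u^4) (u^6) * qpoch_inf (u^2) (u^6) * q powr (11/12))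
      / (qpoch_inf u (u^6) * qpoch_inf (u^5) (u^6)
         * ((1 - u^6) * q powr (1/4) * (qpoch_inf (u^6) (u^6))\<^sup>2 / (qpoch_inf (u^3) (u^6))\<^sup>2))"
  have KPQ: "K * P N = Q N" for N
  proof -
    have s2: "fpoch (u^2) (u^6) (Suc N) = (1 - u^2) * fpoch (u^8) (u^6) N" using fS'[of 2 N] by simp
    have s3: "fpoch (u^3) (u^6) (Suc N) = (1 - u^3) * fpoch (u^9) (u^6) N" using fS'[of 3 N] by simp
    have s5: "fpoch (u^5) (u^6) (Suc N) = (1 - u^5) * fpoch (u^11) (u^6) N" using fS'[of 5 N] by simp
    have fu: "fpoch (u^7) (u ^ 6) N > 0" using fp[of 7 N] by simp
    have "Q N = ((1-u)/(1-u^6)) / (((1-u^2)/(1-u^6))^2 * ((1-u^3)/(1-u^6)))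
       * (fpoch (u^4) (u^6) N * ((1 - u^2) * fpoch (u^8) (u^6) N) * (q powr (1/4) * u^2))
      / (((1 - u) * fpoch (u^7) (u^6) N) * ((1 - u^5) * fpoch (u^11) (u^6) N)
         * ((1 - u^6) * q powr (1/4) * (fpoch (u^6) (u^6) N)\<^sup>2 / ((1 - u^3) * fpoch (u^9) (u^6) N)\<^sup>2))"
      unfolding Q_def C0_def s2 s3 s5 fS1 q1112 qn16 qn13 qn12 by (rule refl)
    also have "\<dots> = K * P N" unfolding K_def P_def
      by (rule kpq_alg[symmetric]) (use fp[of 9 N] fp[of 8 N] fp[of 4 N] fp[of 6 N] fp[of 11 N] fu e0 e1 q14 in auto)
    finally show ?thesis by simp
  qed
  have u6: "0 < u ^ 6" "u ^ 6 < 1" using upos[of 6] by auto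
  have limS: "(\<lambda>n. fpoch z (u^6) (Suc n)) \<longlonglongrightarrow> qpoch_inf z (u^6)" for z
    using fpoch_lim[OF u6, of z] by (simp add: filterlim_sequentially_Suc)
  have nzq: "qpoch_inf (u ^ j) (u^6) \<noteq> 0" if "j > 0" for j
    using upos[OF that] by (intro qpoch_nz[OF u6]) auto
  have nzq1: "qpoch_inf u (u^6) \<noteq> 0" using nzq[of 1] by simp
  have QR: "Q \<longlonglongrightarrow> R"
    unfolding Q_def[abs_def] R_def
    by (intro tendsto_intros fpoch_lim[OF u6] limS)
       (use nzq[of 3] nzq[of 6] nzq[of 5] nzq1 e0 q14 in auto)
  have "f sums (K - R)"
    unfolding sums_def psum KPQ by (intro tendsto_intros QR)
  hence sf: "suminf f = K - R" by (rule sums_unique[symmetric])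
  have rhs: "qnum q (1/6) / ((qnum q (1/3))\<^sup>2 * qnum q (1/2))
      * (qpoch_inf (q powr (4/3)) (q\<^sup>2) * qpoch_inf (q powr (2/3)) (q\<^sup>2) * q powr (11/12))
      / (qpoch_inf (q powr (1/3)) (q\<^sup>2) * qpoch_inf (q powr (5/3)) (q\<^sup>2) * qpi q) = R"
  proof -
    have b1: "q powr (4/3) = u^4" by (rule pw) simp
    have b2: "q powr (2/3) = u^2" by (rule pw) simp
    have b3: "q powr (1/3) = u" using pw[of "1/3" 1] by simp
    have b4: "q powr (5/3) = u^5" by (rule pw) simp
    have b5: "qpoch_inf q (u^6) = qpoch_inf (u^3) (u^6)" using q3 by simp
    show ?thesis unfolding R_def C0_def qpi_def b1 b2 b3 b4 q2 b5 by (simp add: mult.assoc)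
  qed
  show ?thesis
    unfolding f_def[symmetric] sf first rhs by simp
qed

end
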